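(* Let $p$ be a self-adjoint projection of $V$ and let $\Phi_0$ and $\Phi_\lambda$ be two distinct quadrics belonging to a projection pencil associated to $p$, generated by invertible self-adjoint transformations $g_0$ and $g_\lambda$ respectively. If $x$ is a common point of $\Phi_0$ and $\Phi_\lambda$, then $\langle p(g_0(x)),g_\lambda(x)\rangle=0$; i.e. the quadrics intersect orthogonally with respect to the quadratic form of $p$.
   Context: $V$ is a real vector space of dimension $n+1$ with a fixed indefinite inner product (nondegenerate symmetric bilinear form) $\langle\cdot,\cdot\rangle$. A linear map $g$ is self-adjoint if $\langle g(x),y\rangle=\langle x,g(y)\rangle$ for all $x,y$. A projection is a linear map $p$ with $p^2=p$. A quadric is the zero set in $P(V)$ of $x\mapsto\langle x,g(x)\rangle$ for a self-adjoint $g$ (generated by $g$); its dual is given by $g^{-1}$ when $g$ is invertible. A projection pencil associated to $p$ is a maximal set of quadrics whose dual self-adjoint transformations lie in a two-dimensional subspace of the space of linear maps of $V$ that contains $p$. *)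

theory Defs
  imports "HOL-Analysis.Analysis"
begin

text \<open>V is modelled as real^'n (dimension n+1 = CARD('n)); linear maps of V are
  matrices real^'n^'n acting by *v. The inner product is an abstract bilinear form B.\<close>

definition indefinite_inner_product :: "(real^'n \<Rightarrow> real^'n \<Rightarrow> real) \<Rightarrow> bool" where
  "indefinite_inner_product B \<longleftrightarrow>
     bilinear B \<and> (\<forall>x y. B x y = B y x) \<and>
     (\<forall>x. (\<forall>y. B x y = 0) \<longrightarrow> x = 0) \<and>
     (\<exists>u v. B u u > 0 \<and> B v v < 0)"

definition self_adjoint :: "(real^'n \<Rightarrow> real^'n \<Rightarrow> real) \<Rightarrow> real^'n^'n \<Rightarrow> bool" where
  "self_adjoint B g \<longleftrightarrow> (\<forall>x y. B (g *v x) y = B x (g *v y))"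

definition is_projection :: "real^'n^'n \<Rightarrow> bool" where
  "is_projection p \<longleftrightarrow> p ** p = p"

text \<open>The quadric generated by g: its zero set in P(V), represented by the cone of
  nonzero vectors x with B x (g x) = 0.\<close>
definition quadric :: "(real^'n \<Rightarrow> real^'n \<Rightarrow> real) \<Rightarrow> real^'n^'n \<Rightarrow> (real^'n) set" where
  "quadric B g = {x. x \<noteq> 0 \<and> B x (g *v x) = 0}"

definition dual_transformation :: "real^'n^'n \<Rightarrow> real^'n^'n" where
  "dual_transformation g = matrix_inv g"

text \<open>A projection pencil associated to p is determined by a two-dimensional subspace W of
  the space of linear maps containing p; it consists of all quadrics (generated by invertible
  self-adjoint g) whose dual transformation lies in W.\<close>
definition pencil_plane :: "real^'n^'n \<Rightarrow> (real^'n^'n) set \<Rightarrow> bool" where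
  "pencil_plane p W \<longleftrightarrow> subspace W \<and> dim W = 2 \<and> p \<in> W"

definition in_projection_pencil ::
  "(real^'n \<Rightarrow> real^'n \<Rightarrow> real) \<Rightarrow> (real^'n^'n) set \<Rightarrow> real^'n^'n \<Rightarrow> bool" where
  "in_projection_pencil B W g \<longleftrightarrow>
     invertible g \<and> self_adjoint B g \<and> dual_transformation g \<in> W"

end

theory Submission
  imports Defs
begin

lemma minv:
  fixes g :: "real^'n^'n"
  assumes "invertible g"
  shows "g ** matrix_inv g = mat 1" "matrix_inv g ** g = mat 1"
proof -
  from assms obtain A where "g ** A = mat 1 \<and> A ** g = mat 1" unfolding invertible_def by blast
  hence "g ** matrix_inv g = mat 1 \<and> matrix_inv g ** g = mat 1"
    unfolding matrix_inv_def by (rule someI)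
  thus "g ** matrix_inv g = mat 1" "matrix_inv g ** g = mat 1" by auto
qed

lemma mat1_nz: "(mat 1 :: real^'n^'n) \<noteq> 0"
proof
  assume "(mat 1 :: real^'n^'n) = 0"
  hence "(mat 1 :: real^'n^'n) $ undefined $ undefined = 0" by simp
  thus False by (simp add: mat_def)
qed

theorem mainTheorem2:
  fixes B :: "real^'n \<Rightarrow> real^'n \<Rightarrow> real"
    and p g0 gl :: "real^'n^'n" and W :: "(real^'n^'n) set" and x :: "real^'n"
  assumes "indefinite_inner_product B"
    and "self_adjoint B p" and "is_projection p"
    and "pencil_plane p W"
    and "in_projection_pencil B W g0" and "in_projection_pencil B W gl"
    and "quadric B g0 \<noteq> quadric B gl"
    and "x \<in> quadric B g0" and "x \<in> quadric B gl"
  shows "B (p *v (g0 *v x)) (gl *v x) = 0"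
proof -
  have bil: "bilinear B" and sym: "\<And>u v. B u v = B v u"
    using assms(1) unfolding indefinite_inner_product_def by auto
  have inv0: "invertible g0" and sa0: "self_adjoint B g0" and h0W: "matrix_inv g0 \<in> W"
    using assms(5) unfolding in_projection_pencil_def dual_transformation_def by auto
  have invl: "invertible gl" and sal: "self_adjoint B gl" and hlW: "matrix_inv gl \<in> W"
    using assms(6) unfolding in_projection_pencil_def dual_transformation_def by auto
  define h0 where "h0 = matrix_inv g0"
  define hl where "hl = matrix_inv gl"
  note m0 = minv[OF inv0, folded h0_def]
  note ml = minv[OF invl, folded hl_def]
  have x0: "B x (g0 *v x) = 0" and xl: "B x (gl *v x) = 0"
    using assms(8,9) unfolding quadric_def by auto
  have hlsa: "B (hl *v u) v = B u (hl *v v)" for u v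
  proof -
    have "B (hl *v u) v = B (hl *v u) (gl *v (hl *v v))"
      by (simp add: matrix_vector_mul_assoc ml)
    also have "\<dots> = B (gl *v (hl *v u)) (hl *v v)"
      using sal unfolding self_adjoint_def by metis
    also have "\<dots> = B u (hl *v v)" by (simp add: matrix_vector_mul_assoc ml)
    finally show ?thesis .
  qed
  have hl_nz: "hl \<noteq> 0" using ml mat1_nz by force
  have ne: "h0 \<noteq> hl"
  proof
    assume "h0 = hl"
    hence "g0 = gl"
      by (metis m0(1) ml(2) matrix_mul_assoc matrix_mul_lid matrix_mul_rid)
    thus False using assms(7) by simp
  qed
  show ?thesis
  proof (cases "independent {h0, hl}")
    case True
    have sub: "{h0, hl} \<subseteq> W" using h0W hlW h0_def hl_def by auto
    have "card {h0, hl} = 2" using ne by simp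
    hence "W \<subseteq> span {h0, hl}"
      using card_ge_dim_independent[OF sub True] assms(4) unfolding pencil_plane_def by simp
    hence "p \<in> span {h0, hl}" using assms(4) unfolding pencil_plane_def by auto
    then obtain a b where pe: "p = a *\<^sub>R h0 + b *\<^sub>R hl"
      unfolding span_insert span_singleton by (auto simp: algebra_simps)
    have "p *v (g0 *v x) = a *\<^sub>R x + b *\<^sub>R (hl *v (g0 *v x))"
    proof -
      have "p *v (g0 *v x) = (a *\<^sub>R h0) *v (g0 *v x) + (b *\<^sub>R hl) *v (g0 *v x)"
        by (simp add: pe matrix_vector_mult_add_rdistrib)
      also have "\<dots> = a *\<^sub>R (h0 *v (g0 *v x)) + b *\<^sub>R (hl *v (g0 *v x))"
        by (simp only: scaleR_matrix_vector_assoc)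
      also have "h0 *v (g0 *v x) = x" by (simp add: matrix_vector_mul_assoc m0)
      finally show ?thesis .
    qed
    hence "B (p *v (g0 *v x)) (gl *v x) = a * B x (gl *v x) + b * B (hl *v (g0 *v x)) (gl *v x)"
      using bil by (simp add: bilinear_ladd bilinear_lmul)
    also have "B (hl *v (g0 *v x)) (gl *v x) = B (g0 *v x) x"
      using hlsa[of "g0 *v x" "gl *v x"] by (simp add: matrix_vector_mul_assoc ml)
    also have "\<dots> = 0" using x0 sym by simp
    finally show ?thesis using xl by simp
  next
    case False
    have "independent {hl}" using hl_nz by simp
    hence "h0 \<in> span {hl}" using False ne by (simp add: independent_insert)
    then obtain k where hk: "h0 = k *\<^sub>R hl" unfolding span_singleton by auto
    have "gl = k *\<^sub>R g0"
    proof -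
      have "mat 1 = k *\<^sub>R (hl ** g0)" using m0(2) hk by (simp add: scalar_matrix_assoc matrix_scalar_ac)
      hence "gl ** mat 1 = k *\<^sub>R (gl ** hl ** g0)"
        by (simp add: matrix_mul_assoc scalar_matrix_assoc matrix_scalar_ac)
      thus ?thesis by (simp add: ml)
    qed
    moreover have "k \<noteq> 0" using hk m0 mat1_nz by force
    ultimately have "quadric B gl = quadric B g0"
      using bil unfolding quadric_def
      by (auto simp: scaleR_matrix_vector_assoc[symmetric] bilinear_rmul)
    thus ?thesis using assms(7) by simp
  qed
qed

end
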